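(* Let $N$ be a smooth compact connected manifold, Riemannian-embedded in a matrix algebra $\mathcal M$ (with $0\in N$). Then the space $L^2(S^1,N)$ is contractible.
   Context: $\mathcal M$ is an algebra of complex matrices with Hermitian product $(A,B)\mapsto \mathrm{tr}(AB^* )$, $S^1=\mathbb R/\mathbb Z$. $L^2(S^1,N)$ is the closure of $C^\infty(S^1,N)$ in $L^2(S^1,\mathcal M)$, with the topology of the $L^2$-norm. *)

theory Defs
  imports "HOL-Analysis.Analysis"
begin

(* C^k maps on a set S (intended: S open), via Frechet derivatives:
   C^(k+1) iff differentiable at every point of S with every directional
   component x \<mapsto> f' x v of the derivative of class C^k. *)
fun Ck_on :: "nat \<Rightarrow> 'a::real_normed_vector set \<Rightarrow> ('a \<Rightarrow> 'b::real_normed_vector) \<Rightarrow> bool" where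
  "Ck_on 0 S f = continuous_on S f"
| "Ck_on (Suc k) S f =
     (\<exists>f'. (\<forall>x\<in>S. (f has_derivative f' x) (at x)) \<and> (\<forall>v. Ck_on k S (\<lambda>x. f' x v)))"

definition smooth_on :: "'a::real_normed_vector set \<Rightarrow> ('a \<Rightarrow> 'b::real_normed_vector) \<Rightarrow> bool" where
  "smooth_on S f \<longleftrightarrow> (\<forall>k. Ck_on k S f)"

definition smooth_submanifold :: "'a::euclidean_space set \<Rightarrow> bool" where
  "smooth_submanifold N \<longleftrightarrow>
     (\<forall>p\<in>N. \<exists>U W (\<phi>::'a \<Rightarrow> 'a) \<psi> L.
        open U \<and> p \<in> U \<and> open W \<and> subspace L \<and>
        smooth_on U \<phi> \<and> smooth_on W \<psi> \<and> \<phi> ` U = W \<and>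
        (\<forall>x\<in>U. \<psi> (\<phi> x) = x) \<and> (\<forall>y\<in>W. \<phi> (\<psi> y) = y) \<and>
        \<phi> ` (N \<inter> U) = W \<inter> L)"

(* S^1 = R/Z; functions on S^1 are represented on the fundamental domain [0,1] *)
definition L2_loops :: "(real \<Rightarrow> 'a::euclidean_space) set" where
  "L2_loops = {f. f \<in> borel_measurable (lebesgue_on {0..1}) \<and>
                  integrable (lebesgue_on {0..1}) (\<lambda>t. (norm (f t))\<^sup>2)}"

definition L2_dist :: "(real \<Rightarrow> 'a::euclidean_space) \<Rightarrow> (real \<Rightarrow> 'a) \<Rightarrow> real" where
  "L2_dist f g = sqrt (integral\<^sup>L (lebesgue_on {0..1}) (\<lambda>t. (norm (f t - g t))\<^sup>2))"

(* C^\<infinity>(S^1, N): smooth 1-periodic maps R \<Rightarrow> M with values in N *)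
definition smooth_loops :: "'a::euclidean_space set \<Rightarrow> (real \<Rightarrow> 'a) set" where
  "smooth_loops N = {\<gamma>. smooth_on UNIV \<gamma> \<and> (\<forall>t. \<gamma> (t + 1) = \<gamma> t) \<and> (\<forall>t. \<gamma> t \<in> N)}"

(* L^2(S^1,N): L^2-closure of C^\<infinity>(S^1,N) in L^2(S^1,M) *)
definition L2_loops_in :: "'a::euclidean_space set \<Rightarrow> (real \<Rightarrow> 'a) set" where
  "L2_loops_in N = {f \<in> L2_loops. \<forall>e>0. \<exists>\<gamma>\<in>smooth_loops N. L2_dist f \<gamma> < e}"

definition pmetric_topology :: "'b set \<Rightarrow> ('b \<Rightarrow> 'b \<Rightarrow> real) \<Rightarrow> 'b topology" where
  "pmetric_topology X d =
     topology (\<lambda>U. U \<subseteq> X \<and> (\<forall>x\<in>U. \<exists>e>0. \<forall>y\<in>X. d x y < e \<longrightarrow> y \<in> U))"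


end

theory Submission
  imports Defs
begin


lemma Ck_on_Suc_imp: "Ck_on (Suc k) S f \<Longrightarrow> Ck_on k S f"
proof (induction k arbitrary: f)
  case 0
  then obtain f' where "\<forall>x\<in>S. (f has_derivative f' x) (at x)" by auto
  then show ?case
    by (auto intro!: continuous_at_imp_continuous_on has_derivative_continuous)
next
  case (Suc k)
  then obtain f' where "\<forall>x\<in>S. (f has_derivative f' x) (at x)" "\<forall>v. Ck_on (Suc k) S (\<lambda>x. f' x v)"
    by auto
  then show ?case using Suc.IH by auto
qed

lemma Ck_on_le_aux: "Ck_on (m + d) S f \<Longrightarrow> Ck_on m S f"
  by (induction d) (auto dest: Ck_on_Suc_imp simp del: Ck_on.simps)

lemma Ck_on_le: "m \<le> k \<Longrightarrow> Ck_on k S f \<Longrightarrow> Ck_on m S f"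
  using Ck_on_le_aux[of m "k - m"] by auto

lemma Ck_on_subset: "Ck_on k S f \<Longrightarrow> T \<subseteq> S \<Longrightarrow> Ck_on k T f"
proof (induction k arbitrary: f)
  case 0 then show ?case by (auto intro: continuous_on_subset)
next
  case (Suc k) then show ?case by (simp, meson subsetD)
qed

lemma Ck_on_const: "Ck_on k S (\<lambda>x. c)"
proof (induction k arbitrary: c)
  case 0 then show ?case by simp
next
  case (Suc k) then show ?case
    by (auto intro!: exI[of _ "\<lambda>x v. 0"])
qed

lemma Ck_on_ident: "Ck_on k S (\<lambda>x. x)"
proof (cases k)
  case 0 then show ?thesis by simp
next
  case (Suc k) then show ?thesis
    by (auto intro!: exI[of _ "\<lambda>x v. v"] Ck_on_const)
qed

lemma Ck_on_add: "Ck_on k S f \<Longrightarrow> Ck_on k S g \<Longrightarrow> Ck_on k S (\<lambda>x. f x + g x)"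
proof (induction k arbitrary: f g)
  case 0 then show ?case by (auto intro: continuous_on_add)
next
  case (Suc k)
  from Suc.prems obtain f' g' where
    f: "\<forall>x\<in>S. (f has_derivative f' x) (at x)" "\<forall>v. Ck_on k S (\<lambda>x. f' x v)" and
    g: "\<forall>x\<in>S. (g has_derivative g' x) (at x)" "\<forall>v. Ck_on k S (\<lambda>x. g' x v)" by auto
  show ?case
    by (auto intro!: exI[of _ "\<lambda>x v. f' x v + g' x v"] has_derivative_add Suc.IH f[rule_format] g[rule_format])
qed

lemma Ck_on_sum: "finite I \<Longrightarrow> (\<And>i. i \<in> I \<Longrightarrow> Ck_on k S (f i)) \<Longrightarrow> Ck_on k S (\<lambda>x. \<Sum>i\<in>I. f i x)"
  by (induction I rule: finite_induct) (auto intro: Ck_on_const Ck_on_add)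

lemma Ck_on_linear: "bounded_linear L \<Longrightarrow> Ck_on k S f \<Longrightarrow> Ck_on k S (\<lambda>x. L (f x))"
proof (induction k arbitrary: f)
  case 0 then show ?case
    by (auto intro: continuous_on_compose2[OF linear_continuous_on[OF 0(1)]])
next
  case (Suc k)
  from Suc.prems obtain f' where
    f: "\<forall>x\<in>S. (f has_derivative f' x) (at x)" "\<forall>v. Ck_on k S (\<lambda>x. f' x v)" by auto
  show ?case
    by (auto intro!: exI[of _ "\<lambda>x v. L (f' x v)"] Suc.IH f[rule_format] bounded_linear.has_derivative[OF Suc.prems(1)] Suc.prems(1))
qed

lemma Ck_on_scaleR: "Ck_on k S (a :: _ \<Rightarrow> real) \<Longrightarrow> Ck_on k S F \<Longrightarrow> Ck_on k S (\<lambda>x. a x *\<^sub>R F x)"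
proof (induction k arbitrary: a F)
  case 0 then show ?case by (auto intro: continuous_on_scaleR)
next
  case (Suc k)
  from Suc.prems obtain a' F' where
    a: "\<forall>x\<in>S. (a has_derivative a' x) (at x)" "\<forall>v. Ck_on k S (\<lambda>x. a' x v)" and
    F: "\<forall>x\<in>S. (F has_derivative F' x) (at x)" "\<forall>v. Ck_on k S (\<lambda>x. F' x v)" by auto
  have a0: "Ck_on k S a" and F0: "Ck_on k S F" using Suc.prems Ck_on_Suc_imp by blast+
  show ?case
    by (auto intro!: exI[of _ "\<lambda>x v. a x *\<^sub>R F' x v + a' x v *\<^sub>R F x"] has_derivative_scaleR
        Ck_on_add Suc.IH a[rule_format] F[rule_format] a0 F0)
qed

lemma Ck_on_mult: "Ck_on k S (a :: _ \<Rightarrow> real) \<Longrightarrow> Ck_on k S b \<Longrightarrow> Ck_on k S (\<lambda>x. a x * b x)"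
  using Ck_on_scaleR[of k S a b] by simp

lemma Ck_on_inverse:
  assumes "Ck_on k S (u :: _ \<Rightarrow> real)" "\<forall>x\<in>S. u x \<noteq> 0"
  shows "Ck_on k S (\<lambda>x. inverse (u x))"
  using assms
proof (induction k)
  case 0 then show ?case by (auto intro: continuous_on_inverse)
next
  case (Suc k)
  from Suc.prems obtain u' where
    u: "\<forall>x\<in>S. (u has_derivative u' x) (at x)" "\<forall>v. Ck_on k S (\<lambda>x. u' x v)" by auto
  have i: "Ck_on k S (\<lambda>x. inverse (u x))" using Suc Ck_on_Suc_imp by blast
  have m: "Ck_on k S (\<lambda>x. - (inverse (u x) * u' x v * inverse (u x)))" for v
  proof -
    have "Ck_on k S (\<lambda>x. inverse (u x) * u' x v * inverse (u x))"
      by (intro Ck_on_mult i u(2)[rule_format])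
    from Ck_on_linear[OF bounded_linear_minus[OF bounded_linear_ident] this] show ?thesis .
  qed
  show ?case
  proof (simp only: Ck_on.simps, intro exI[of _ "\<lambda>x v. - (inverse (u x) * u' x v * inverse (u x))"] conjI ballI allI)
    fix x assume "x \<in> S"
    then show "((\<lambda>x. inverse (u x)) has_derivative (\<lambda>v. - (inverse (u x) * u' x v * inverse (u x)))) (at x)"
      using Deriv.has_derivative_inverse[of u x "u' x" UNIV] Suc.prems(2) u(1) by blast
  next
    fix v show "Ck_on k S (\<lambda>x. - (inverse (u x) * u' x v * inverse (u x)))" by (rule m)
  qed
qed

lemma Ck_on_cong:
  assumes "open S" "\<And>x. x \<in> S \<Longrightarrow> f x = g x" "Ck_on k S f"
  shows "Ck_on k S g"
proof (cases k)
  case 0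
  have "continuous_on S f" using assms(3) 0 by simp
  then have "continuous_on S g" using continuous_on_cong[OF refl, of S f g] assms(2) by simp
  then show ?thesis using 0 by simp
next
  case (Suc m)
  from assms(3) obtain f' where
    f: "\<forall>x\<in>S. (f has_derivative f' x) (at x)" "\<forall>v. Ck_on m S (\<lambda>x. f' x v)" by (auto simp: Suc)
  have "\<forall>x\<in>S. (g has_derivative f' x) (at x)"
  proof
    fix x assume x: "x \<in> S"
    show "(g has_derivative f' x) (at x)"
      by (rule has_derivative_transform_within_open[OF f(1)[rule_format, OF x] assms(1) x assms(2)])
  qed
  then show ?thesis unfolding Suc using f(2) by auto
qed

lemma Ck_on_local:
  assumes "\<And>x. x \<in> S \<Longrightarrow> \<exists>V. open V \<and> x \<in> V \<and> Ck_on k V f"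
  shows "Ck_on k S f"
  using assms
proof (induction k arbitrary: f)
  case 0
  show ?case
  proof (simp only: Ck_on.simps, intro continuous_at_imp_continuous_on ballI)
    fix x assume "x \<in> S"
    then obtain V where "open V" "x \<in> V" "continuous_on V f" using 0 by auto
    then show "isCont f x" using continuous_on_eq_continuous_at by blast
  qed
next
  case (Suc k)
  have D: "\<exists>V f'. open V \<and> x \<in> V \<and> (\<forall>y\<in>V. (f has_derivative f' y) (at y)) \<and> (\<forall>v. Ck_on k V (\<lambda>y. f' y v))"
    if "x \<in> S" for x using Suc.prems[OF that] by auto
  show ?case
  proof (simp, intro exI[of _ "\<lambda>x. frechet_derivative f (at x)"] conjI ballI allI)
    fix x assume "x \<in> S"
    then obtain V f' where "x \<in> V" "\<forall>y\<in>V. (f has_derivative f' y) (at y)" using D by blast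
    then show "(f has_derivative frechet_derivative f (at x)) (at x)"
      using frechet_derivative_works differentiableI by blast
  next
    fix v
    show "Ck_on k S (\<lambda>x. frechet_derivative f (at x) v)"
    proof (rule Suc.IH)
      fix x assume "x \<in> S"
      then obtain V f' where V: "open V" "x \<in> V" "\<forall>y\<in>V. (f has_derivative f' y) (at y)" "\<forall>v. Ck_on k V (\<lambda>y. f' y v)"
        using D by blast
      have "Ck_on k V (\<lambda>y. frechet_derivative f (at y) v)"
      proof (rule Ck_on_cong[OF V(1) _ V(4)[rule_format, of v]])
        fix y assume "y \<in> V"
        then have "f' y = frechet_derivative f (at y)" using V(3) frechet_derivative_at by blast
        then show "f' y v = frechet_derivative f (at y) v" by simp
      qed
      then show "\<exists>V. open V \<and> x \<in> V \<and> Ck_on k V (\<lambda>x. frechet_derivative f (at x) v)" using V by blast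
    qed
  qed
qed

lemma Ck_on_compose:
  fixes g :: "'b::euclidean_space \<Rightarrow> 'c::real_normed_vector" and c :: "'a::real_normed_vector \<Rightarrow> 'b"
  assumes "Ck_on k W g" "Ck_on k T c" "c ` T \<subseteq> W"
  shows "Ck_on k T (\<lambda>x. g (c x))"
  using assms
proof (induction k arbitrary: g c)
  case 0
  have "continuous_on W g" "continuous_on T c" using 0 by simp_all
  then have "continuous_on T (\<lambda>x. g (c x))" using continuous_on_compose2 0(3) by blast
  then show ?case by simp
next
  case (Suc k)
  from Suc.prems obtain g' where
    g: "\<forall>x\<in>W. (g has_derivative g' x) (at x)" "\<forall>v. Ck_on k W (\<lambda>x. g' x v)" by auto
  from Suc.prems obtain c' where
    c: "\<forall>x\<in>T. (c has_derivative c' x) (at x)" "\<forall>v. Ck_on k T (\<lambda>x. c' x v)" by auto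
  have c0: "Ck_on k T c" using Suc.prems Ck_on_Suc_imp by blast
  have lin: "g' (c x) w = (\<Sum>i\<in>Basis. (w \<bullet> i) *\<^sub>R g' (c x) i)" if "x \<in> T" for x w
  proof -
    have cx: "c x \<in> W" using that Suc.prems(3) by blast
    have L: "linear (g' (c x))" using g(1) cx has_derivative_linear by blast
    then have "g' (c x) (\<Sum>i\<in>Basis. (w \<bullet> i) *\<^sub>R i) = (\<Sum>i\<in>Basis. g' (c x) ((w \<bullet> i) *\<^sub>R i))"
      by (rule linear_sum)
    also have "\<dots> = (\<Sum>i\<in>Basis. (w \<bullet> i) *\<^sub>R g' (c x) i)"
      by (rule sum.cong[OF refl]) (rule linear_scale[OF L])
    finally show ?thesis by (simp only: euclidean_representation)
  qed
  have der: "((\<lambda>x. g (c x)) has_derivative (\<lambda>v. \<Sum>i\<in>Basis. (c' x v \<bullet> i) *\<^sub>R g' (c x) i)) (at x)"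
    if "x \<in> T" for x
  proof -
    have "((\<lambda>x. g (c x)) has_derivative (\<lambda>v. g' (c x) (c' x v))) (at x)"
    proof (rule has_derivative_compose[of c "c' x" x UNIV g "g' (c x)"])
      show "(c has_derivative c' x) (at x)" using c(1) that by blast
      have "c x \<in> W" using that Suc.prems(3) by blast
      then show "(g has_derivative g' (c x)) (at (c x))" using g(1) by blast
    qed
    moreover have "(\<lambda>v. g' (c x) (c' x v)) = (\<lambda>v. \<Sum>i\<in>Basis. (c' x v \<bullet> i) *\<^sub>R g' (c x) i)"
      using lin[OF that] by (intro ext) blast
    ultimately show ?thesis by simp
  qed
  have C: "Ck_on k T (\<lambda>x. \<Sum>i\<in>Basis. (c' x v \<bullet> i) *\<^sub>R g' (c x) i)" for v
  proof (intro Ck_on_sum finite_Basis Ck_on_scaleR)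
    fix i :: 'b
    show "Ck_on k T (\<lambda>x. c' x v \<bullet> i)"
      using Ck_on_linear[OF bounded_linear_inner_left c(2)[rule_format, of v]] .
    show "Ck_on k T (\<lambda>x. g' (c x) i)"
      using Suc.IH[OF g(2)[rule_format, of i] c0 Suc.prems(3)] .
  qed
  show ?case
  proof (simp only: Ck_on.simps, intro exI[of _ "\<lambda>x v. \<Sum>i\<in>Basis. (c' x v \<bullet> i) *\<^sub>R g' (c x) i"] conjI ballI allI)
    fix x assume "x \<in> T" then show "((\<lambda>x. g (c x)) has_derivative (\<lambda>v. \<Sum>i\<in>Basis. (c' x v \<bullet> i) *\<^sub>R g' (c x) i)) (at x)"
      by (rule der)
  next
    fix v show "Ck_on k T (\<lambda>x. \<Sum>i\<in>Basis. (c' x v \<bullet> i) *\<^sub>R g' (c x) i)" by (rule C)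
  qed
qed

lemma smooth_on_Ck: "smooth_on S f \<Longrightarrow> Ck_on k S f"
  by (simp add: smooth_on_def)



definition flg :: "nat \<Rightarrow> real \<Rightarrow> real" where
  "flg n t = (if t > 0 then inverse t ^ n * exp (- inverse t) else 0)"

lemma flg_lim_right: "(flg n \<longlongrightarrow> 0) (at_right 0)"
proof -
  have "((\<lambda>x. x ^ n / exp x) \<longlongrightarrow> (0::real)) at_top" by (rule tendsto_power_div_exp_0)
  then have "((\<lambda>t. inverse t ^ n / exp (inverse t)) \<longlongrightarrow> (0::real)) (at_right 0)"
    by (rule filterlim_compose) (rule filterlim_inverse_at_top_right)
  moreover have "eventually (\<lambda>t. inverse t ^ n / exp (inverse t) = flg n t) (at_right (0::real))"
  proof (rule eventually_mono[OF eventually_at_right_less])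
    fix t :: real assume "0 < t"
    then show "inverse t ^ n / exp (inverse t) = flg n t"
      by (simp add: flg_def exp_minus divide_inverse)
  qed
  ultimately show ?thesis by (rule Lim_transform_eventually)
qed

lemma flg_lim_left: "(flg n \<longlongrightarrow> 0) (at_left 0)"
proof -
  have "eventually (\<lambda>t. 0 = flg n t) (at_left (0::real))"
    by (rule eventually_mono[OF eventually_at_left_real[of "-1" 0]]) (auto simp: flg_def)
  then show ?thesis by (rule Lim_transform_eventually[OF tendsto_const])
qed

lemma flg_lim: "(flg n \<longlongrightarrow> 0) (at 0)"
  using flg_lim_left flg_lim_right filterlim_at_split by blast

lemma flg_deriv: "(flg n has_field_derivative (- real n * flg (Suc n) t + flg (Suc (Suc n)) t)) (at t)"
proof (cases "t > 0")
  case True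
  have d: "((\<lambda>t. inverse t ^ n * exp (- inverse t)) has_field_derivative
     (- real n * inverse t ^ Suc n + inverse t ^ Suc (Suc n)) * exp (- inverse t)) (at t)"
    apply (intro derivative_eq_intros)
    apply (rule refl, use True in linarith, rule refl, rule refl, rule refl, use True in linarith, rule refl, rule refl, rule refl)
    apply (cases n)
     apply (simp add: algebra_simps)
    apply (simp add: algebra_simps)
    done
  have e: "(- real n * inverse t ^ Suc n + inverse t ^ Suc (Suc n)) * exp (- inverse t)
     = - real n * flg (Suc n) t + flg (Suc (Suc n)) t"
    using True by (simp add: flg_def algebra_simps)
  show ?thesis unfolding e[symmetric]
    by (rule has_field_derivative_transform_within_open[OF d, of "{0<..}"]) (use True in \<open>simp_all add: flg_def\<close>)
next
  case False
  show ?thesis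
  proof (cases "t < 0")
    case True
    have "((\<lambda>t. 0) has_field_derivative 0) (at t)" by simp
    then have "(flg n has_field_derivative 0) (at t)"
      by (rule has_field_derivative_transform_within_open[of _ _ t "{..<0}"]) (use True in \<open>auto simp: flg_def\<close>)
    then show ?thesis using True by (simp add: flg_def)
  next
    case False
    with \<open>\<not> t > 0\<close> have t: "t = 0" by simp
    have "(\<lambda>y. (flg n y - flg n 0) / (y - 0)) = flg (Suc n)"
    proof
      fix y :: real show "(flg n y - flg n 0) / (y - 0) = flg (Suc n) y"
        by (cases "y > 0") (simp_all add: flg_def divide_inverse)
    qed
    then have "((\<lambda>y. (flg n y - flg n 0) / (y - 0)) \<longlongrightarrow> 0) (at 0)"
      using flg_lim by simp
    then show ?thesis unfolding t has_field_derivative_iff by (simp add: flg_def)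
  qed
qed

lemma flg_Ck: "Ck_on k UNIV (flg n)"
proof (induction k arbitrary: n)
  case 0
  have "\<forall>t\<in>UNIV. isCont (flg n) t" using flg_deriv DERIV_isCont by blast
  then have "continuous_on UNIV (flg n)" by (rule continuous_at_imp_continuous_on)
  then show ?case by simp
next
  case (Suc k)
  have C: "Ck_on k UNIV (\<lambda>t. (- real n * flg (Suc n) t + flg (Suc (Suc n)) t) * v)" for v
    by (intro Ck_on_mult Ck_on_add Ck_on_const Suc.IH)
  have D: "(flg n has_derivative (\<lambda>v. (- real n * flg (Suc n) t + flg (Suc (Suc n)) t) * v)) (at t)" for t
    using flg_deriv[of n t] by (simp add: has_field_derivative_def)
  show ?case
  proof (simp only: Ck_on.simps, intro exI[of _ "\<lambda>t v. (- real n * flg (Suc n) t + flg (Suc (Suc n)) t) * v"] conjI ballI allI)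
    fix t show "(flg n has_derivative (\<lambda>v. (- real n * flg (Suc n) t + flg (Suc (Suc n)) t) * v)) (at t)" by (rule D)
  next
    fix v show "Ck_on k UNIV (\<lambda>t. (- real n * flg (Suc n) t + flg (Suc (Suc n)) t) * v)" by (rule C)
  qed
qed

lemma flg_pos: "t > 0 \<Longrightarrow> flg n t > 0"
  by (simp add: flg_def)

lemma flg_zero: "t \<le> 0 \<Longrightarrow> flg n t = 0"
  by (simp add: flg_def)

definition st :: "real \<Rightarrow> real" where
  "st t = flg 0 t * inverse (flg 0 t + flg 0 (1 - t))"

lemma st_den_pos: "flg 0 t + flg 0 (1 - t) > 0"
proof -
  have "flg 0 t \<ge> 0" "flg 0 (1 - t) \<ge> 0" by (simp_all add: flg_def)
  moreover have "t > 0 \<or> 1 - t > 0" by linarith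
  ultimately show ?thesis using flg_pos[of t 0] flg_pos[of "1 - t" 0] by linarith
qed

lemma st_Ck: "Ck_on k S st"
proof -
  have l: "Ck_on k UNIV (\<lambda>t::real. 1 - t)"
  proof -
    have "Ck_on k UNIV (\<lambda>t::real. - t)"
      using Ck_on_linear[OF bounded_linear_minus[OF bounded_linear_ident] Ck_on_ident] .
    from Ck_on_add[OF Ck_on_const this] show ?thesis by simp
  qed
  have a: "Ck_on k UNIV (\<lambda>t. flg 0 (1 - t))"
    by (rule Ck_on_compose[OF flg_Ck l]) simp
  have b: "Ck_on k UNIV (\<lambda>t. flg 0 t + flg 0 (1 - t))"
    by (rule Ck_on_add[OF flg_Ck a])
  have nz: "\<forall>t\<in>UNIV. flg 0 t + flg 0 (1 - t) \<noteq> 0"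
    using st_den_pos by (metis less_irrefl)
  have "Ck_on k UNIV st"
    unfolding st_def by (rule Ck_on_mult[OF flg_Ck Ck_on_inverse[OF b nz]])
  then show ?thesis using Ck_on_subset by blast
qed

lemma st_smooth: "smooth_on S st"
  by (simp add: smooth_on_def st_Ck)

lemma st_le0: "t \<le> 0 \<Longrightarrow> st t = 0"
  by (simp add: st_def flg_zero)

lemma st_ge1: "t \<ge> 1 \<Longrightarrow> st t = 1"
  using st_den_pos[of t] by (simp add: st_def flg_zero)

lemma st_bounds: "0 \<le> st t" "st t \<le> 1"
proof -
  have p: "flg 0 t \<ge> 0" "flg 0 (1 - t) \<ge> 0" by (auto simp: flg_def)
  then show "0 \<le> st t" using st_den_pos[of t] by (simp add: st_def)
  show "st t \<le> 1" using st_den_pos[of t] p by (simp add: st_def field_simps)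
qed



lemma smooth_on_compose:
  fixes g :: "'b::euclidean_space \<Rightarrow> 'c::real_normed_vector" and c :: "'a::real_normed_vector \<Rightarrow> 'b"
  assumes "smooth_on W g" "smooth_on T c" "c ` T \<subseteq> W"
  shows "smooth_on T (\<lambda>x. g (c x))"
  unfolding smooth_on_def
proof
  fix k show "Ck_on k T (\<lambda>x. g (c x))"
    by (rule Ck_on_compose[OF smooth_on_Ck[OF assms(1)] smooth_on_Ck[OF assms(2)] assms(3)])
qed

lemma smooth_on_add: assumes "smooth_on S f" "smooth_on S g" shows "smooth_on S (\<lambda>x. f x + g x)"
  unfolding smooth_on_def
proof
  fix k show "Ck_on k S (\<lambda>x. f x + g x)"
    by (rule Ck_on_add[OF smooth_on_Ck[OF assms(1)] smooth_on_Ck[OF assms(2)]])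
qed

lemma smooth_on_scaleR: assumes "smooth_on S a" "smooth_on S F" shows "smooth_on S (\<lambda>x. a x *\<^sub>R F x)"
  unfolding smooth_on_def
proof
  fix k show "Ck_on k S (\<lambda>x. a x *\<^sub>R F x)"
    by (rule Ck_on_scaleR[OF smooth_on_Ck[OF assms(1)] smooth_on_Ck[OF assms(2)]])
qed

lemma smooth_on_mult: assumes "smooth_on S (a :: _ \<Rightarrow> real)" "smooth_on S b" shows "smooth_on S (\<lambda>x. a x * b x)"
  unfolding smooth_on_def
proof
  fix k show "Ck_on k S (\<lambda>x. a x * b x)"
    by (rule Ck_on_mult[OF smooth_on_Ck[OF assms(1)] smooth_on_Ck[OF assms(2)]])
qed

lemma smooth_on_const: "smooth_on S (\<lambda>x. c)"
  unfolding smooth_on_def by (simp add: Ck_on_const)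

lemma smooth_on_ident: "smooth_on S (\<lambda>x. x)"
  unfolding smooth_on_def by (simp add: Ck_on_ident)

lemma smooth_on_subset: assumes "smooth_on S f" "T \<subseteq> S" shows "smooth_on T f"
  unfolding smooth_on_def
proof
  fix k show "Ck_on k T f" by (rule Ck_on_subset[OF smooth_on_Ck[OF assms(1)] assms(2)])
qed

lemma smooth_on_cong: assumes "open S" "\<And>x. x \<in> S \<Longrightarrow> f x = g x" "smooth_on S f" shows "smooth_on S g"
  unfolding smooth_on_def
proof
  fix k show "Ck_on k S g" by (rule Ck_on_cong[OF assms(1,2) smooth_on_Ck[OF assms(3)]])
qed

lemma smooth_on_local:
  assumes "\<And>x. x \<in> S \<Longrightarrow> \<exists>V. open V \<and> x \<in> V \<and> smooth_on V f"
  shows "smooth_on S f"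
  unfolding smooth_on_def
proof
  fix k show "Ck_on k S f"
  proof (rule Ck_on_local)
    fix x assume "x \<in> S"
    then obtain V where "open V" "x \<in> V" "smooth_on V f" using assms by blast
    then show "\<exists>V. open V \<and> x \<in> V \<and> Ck_on k V f" using smooth_on_Ck by blast
  qed
qed

lemma smooth_on_affine: "smooth_on S (\<lambda>t::real. a * t + b)"
  by (intro smooth_on_add smooth_on_mult smooth_on_const smooth_on_ident)

lemma smooth_on_affine_comp:
  fixes c :: "real \<Rightarrow> 'a::real_normed_vector"
  assumes "smooth_on UNIV c" "open V" "\<And>t. t \<in> V \<Longrightarrow> f t = c (a * t + b)"
  shows "smooth_on V f"
proof -
  have "smooth_on V (\<lambda>t. c (a * t + b))"
    by (rule smooth_on_compose[OF assms(1) smooth_on_affine]) simp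
  then show ?thesis by (rule smooth_on_cong[OF assms(2), rotated]) (simp add: assms(3))
qed

lemma smooth_on_locally_const:
  assumes "open V" "\<And>t. t \<in> V \<Longrightarrow> f t = q"
  shows "smooth_on V f"
  by (rule smooth_on_cong[OF assms(1) _ smooth_on_const[of V q]]) (simp add: assms(2))

definition fpath :: "'a::real_normed_vector set \<Rightarrow> 'a \<Rightarrow> 'a \<Rightarrow> (real \<Rightarrow> 'a) \<Rightarrow> bool" where
  "fpath N p q c \<longleftrightarrow> smooth_on UNIV c \<and> (\<forall>v. c v \<in> N) \<and> (\<forall>v\<le>0. c v = p) \<and> (\<forall>v\<ge>1. c v = q)"

lemma fpath_const: "p \<in> N \<Longrightarrow> fpath N p p (\<lambda>v. p)"
  by (simp add: fpath_def smooth_on_const)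

lemma fpath_concat:
  assumes c1: "fpath N p q c1" and c2: "fpath N q r c2"
  shows "fpath N p r (\<lambda>v. if v \<le> 1/2 then c1 (3 * v) else c2 (3 * v - 2))" (is "fpath N p r ?c")
proof -
  have s1: "smooth_on UNIV c1" and s2: "smooth_on UNIV c2" using c1 c2 by (simp_all add: fpath_def)
  have q1: "c1 v = q" if "v \<ge> 1" for v using c1 that by (simp add: fpath_def)
  have q2: "c2 v = q" if "v \<le> 0" for v using c2 that by (simp add: fpath_def)
  have "smooth_on UNIV ?c"
  proof (rule smooth_on_local)
    fix x :: real
    consider "x < 1/2" | "x = 1/2" | "x > 1/2" by linarith
    then show "\<exists>V. open V \<and> x \<in> V \<and> smooth_on V ?c"
    proof cases
      case 1
      have "smooth_on {..<1/2} ?c"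
        by (rule smooth_on_affine_comp[OF s1, of _ _ 3 0]) auto
      then show ?thesis using 1 by (intro exI[of _ "{..<1/2}"]) auto
    next
      case 2
      have "smooth_on {1/3<..<2/3} ?c"
      proof (rule smooth_on_locally_const[of _ _ q])
        fix t :: real assume t: "t \<in> {1/3<..<2/3}"
        show "?c t = q"
        proof (cases "t \<le> 1/2")
          case True then show ?thesis using t q1[of "3 * t"] by simp
        next
          case False then show ?thesis using t q2[of "3 * t - 2"] by simp
        qed
      qed simp
      then show ?thesis using 2 by (intro exI[of _ "{1/3<..<2/3}"]) auto
    next
      case 3
      have "smooth_on {1/2<..} ?c"
        by (rule smooth_on_affine_comp[OF s2, of _ _ 3 "-2"]) auto
      then show ?thesis using 3 by (intro exI[of _ "{1/2<..}"]) auto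
    qed
  qed
  moreover have "?c v \<in> N" for v using c1 c2 by (simp add: fpath_def)
  moreover have "?c v = p" if "v \<le> 0" for v using c1 that by (simp add: fpath_def)
  moreover have "?c v = r" if "v \<ge> 1" for v using c2 that by (simp add: fpath_def)
  ultimately show ?thesis unfolding fpath_def by blast
qed

lemma local_paths:
  fixes N :: "'a::euclidean_space set"
  assumes "smooth_submanifold N" "a \<in> N"
  shows "\<exists>V. open V \<and> a \<in> V \<and> (\<forall>x\<in>N\<inter>V. \<forall>y\<in>N\<inter>V. \<exists>c. fpath N x y c)"
proof -
  have "\<exists>U W (\<phi>::'a \<Rightarrow> 'a) \<psi> L.
        open U \<and> a \<in> U \<and> open W \<and> subspace L \<and>
        smooth_on U \<phi> \<and> smooth_on W \<psi> \<and> \<phi> ` U = W \<and>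
        (\<forall>x\<in>U. \<psi> (\<phi> x) = x) \<and> (\<forall>y\<in>W. \<phi> (\<psi> y) = y) \<and>
        \<phi> ` (N \<inter> U) = W \<inter> L"
    using assms(1)[unfolded smooth_submanifold_def] assms(2) by (rule bspec)
  then obtain U W L and \<phi> \<psi> :: "'a \<Rightarrow> 'a" where ch0: "open U \<and> a \<in> U \<and> open W \<and> subspace L \<and>
        smooth_on U \<phi> \<and> smooth_on W \<psi> \<and> \<phi> ` U = W \<and>
        (\<forall>x\<in>U. \<psi> (\<phi> x) = x) \<and> (\<forall>y\<in>W. \<phi> (\<psi> y) = y) \<and>
        \<phi> ` (N \<inter> U) = W \<inter> L"
    by (elim exE) (erule that)
  have ch: "open U" "a \<in> U" "open W" "subspace L"
        "smooth_on U \<phi>" "smooth_on W \<psi>" "\<phi> ` U = W"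
        "\<forall>x\<in>U. \<psi> (\<phi> x) = x" "\<forall>y\<in>W. \<phi> (\<psi> y) = y" "\<phi> ` (N \<inter> U) = W \<inter> L"
    using ch0 by blast+
  have "\<phi> a \<in> W" using ch(2) unfolding ch(7)[symmetric] by (rule imageI)
  then have "\<exists>e>0. ball (\<phi> a) e \<subseteq> W" using ch(3) by (simp add: open_contains_ball)
  then obtain r where r: "r > 0" "ball (\<phi> a) r \<subseteq> W" by (elim exE conjE)
  define V where "V = \<phi> -` ball (\<phi> a) r \<inter> U"
  have "continuous_on U \<phi>" using smooth_on_Ck[OF ch(5), of 0] by simp
  then have "open V" unfolding V_def continuous_on_open_vimage[OF ch(1)] by simp
  moreover have "a \<in> V" using ch(2) r(1) by (simp add: V_def)
  moreover have "\<exists>c. fpath N x y c" if x: "x \<in> N \<inter> V" and y: "y \<in> N \<inter> V" for x y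
  proof -
    define z where "z v = \<phi> x + st v *\<^sub>R (\<phi> y - \<phi> x)" for v
    have xb: "\<phi> x \<in> ball (\<phi> a) r" and yb: "\<phi> y \<in> ball (\<phi> a) r" using x y by (auto simp: V_def)
    have xL: "\<phi> x \<in> L" and yL: "\<phi> y \<in> L" using x y ch(10) by (auto simp: V_def)
    have zb: "z v \<in> ball (\<phi> a) r" for v
    proof -
      have "(1 - st v) *\<^sub>R \<phi> x + st v *\<^sub>R \<phi> y \<in> ball (\<phi> a) r"
        by (rule convexD_alt[OF convex_ball xb yb st_bounds])
      moreover have "(1 - st v) *\<^sub>R \<phi> x + st v *\<^sub>R \<phi> y = z v"
        by (simp add: z_def algebra_simps)
      ultimately show ?thesis by simp
    qed
    have zL: "z v \<in> L" for v
      unfolding z_def using xL yL ch(4) by (simp add: subspace_add subspace_scale subspace_diff)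
    have zN: "\<psi> (z v) \<in> N" for v
    proof -
      have "z v \<in> W \<inter> L" using zb zL r(2) by blast
      then have "z v \<in> \<phi> ` (N \<inter> U)" using ch(10) by simp
      then obtain w where w: "w \<in> N \<inter> U" "z v = \<phi> w" by (rule imageE) simp
      then show ?thesis using ch(8) by simp
    qed
    have zs: "smooth_on UNIV z"
      unfolding z_def by (intro smooth_on_add smooth_on_scaleR smooth_on_const st_smooth)
    have cs: "smooth_on UNIV (\<lambda>v. \<psi> (z v))"
      by (rule smooth_on_compose[OF ch(6) zs]) (use zb r(2) in blast)
    have "\<psi> (z v) = x" if "v \<le> 0" for v
      using that x ch(8) by (simp add: z_def st_le0 V_def)
    moreover have "\<psi> (z v) = y" if "v \<ge> 1" for v
      using that y ch(8) by (simp add: z_def st_ge1 V_def)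
    ultimately have "fpath N x y (\<lambda>v. \<psi> (z v))"
      unfolding fpath_def using cs zN by blast
    then show ?thesis by blast
  qed
  ultimately show ?thesis by blast
qed

lemma paths_to_0:
  fixes N :: "'a::euclidean_space set"
  assumes "smooth_submanifold N" "connected N" "0 \<in> N" "p \<in> N"
  shows "\<exists>c. fpath N p 0 c"
proof (rule connected_induction_simple[OF assms(2,3,4), where P = "\<lambda>x. \<exists>c. fpath N x 0 c"])
  show "\<exists>c. fpath N 0 0 c" using fpath_const[OF assms(3)] by blast
next
  fix a assume "a \<in> N"
  then obtain V where V: "open V" "a \<in> V" "\<forall>x\<in>N\<inter>V. \<forall>y\<in>N\<inter>V. \<exists>c. fpath N x y c"
    using local_paths[OF assms(1)] by blast
  show "\<exists>T. openin (top_of_set N) T \<and> a \<in> T \<and> (\<forall>x\<in>T. \<forall>y\<in>T. (\<exists>c. fpath N x 0 c) \<longrightarrow> (\<exists>c. fpath N y 0 c))"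
  proof (intro exI[of _ "N \<inter> V"] conjI ballI impI)
    show "openin (top_of_set N) (N \<inter> V)" using V(1) by blast
    show "a \<in> N \<inter> V" using V(2) \<open>a \<in> N\<close> by blast
  next
    fix x y assume xy: "x \<in> N \<inter> V" "y \<in> N \<inter> V" and "\<exists>c. fpath N x 0 c"
    then obtain c2 where c2: "fpath N x 0 c2" by blast
    obtain c1 where "fpath N y x c1" using V(3) xy by blast
    then show "\<exists>c. fpath N y 0 c" using fpath_concat[OF _ c2] by blast
  qed
qed



lemma frac_in: "of_int n \<le> t \<Longrightarrow> t < of_int n + 1 \<Longrightarrow> frac t = t - of_int n"
  by (simp add: frac_def floor_eq_iff)

lemma frac_plus1: "frac (t + 1) = frac (t::real)"
proof -
  have "\<lfloor>t + 1\<rfloor> = \<lfloor>t\<rfloor> + 1" by simp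
  then show ?thesis by (simp add: frac_def)
qed

lemma smooth_st_affine: "smooth_on S (\<lambda>t. st ((t - c) / h))"
proof -
  have "smooth_on S (\<lambda>t. st ((1/h) * t + (- (c/h))))"
    by (rule smooth_on_compose[OF st_smooth[of UNIV] smooth_on_affine]) simp
  moreover have "(\<lambda>t. st ((1/h) * t + (- (c/h)))) = (\<lambda>t. st ((t - c) / h))"
    by (simp add: diff_divide_distrib)
  ultimately show ?thesis by simp
qed

lemma smooth_on_cong_on:
  "smooth_on V g \<Longrightarrow> open V \<Longrightarrow> (\<And>t. t \<in> V \<Longrightarrow> f t = g t) \<Longrightarrow> smooth_on V f"
  by (rule smooth_on_cong[of V g f]) auto

lemma cut_approx_pointwise:
  fixes N :: "'a::euclidean_space set" and \<gamma> :: "real \<Rightarrow> 'a"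
  assumes sm: "smooth_submanifold N" and conn: "connected N" and N0: "0 \<in> N"
    and g: "\<gamma> \<in> smooth_loops N"
    and a: "0 < a" "a < 1" and h: "0 < h" "10 * h \<le> 1 - a" "4 * h \<le> a"
  shows "\<exists>\<delta>\<in>smooth_loops N. \<forall>t. 0 \<le> t \<longrightarrow> t \<le> 1 \<longrightarrow>
           (t \<le> 2 * h \<or> (a \<le> t \<and> t \<le> a + 3 * h) \<or> 1 - 2 * h \<le> t) \<or>
           (if t \<le> a then \<gamma> t else 0) = \<delta> t"
proof -
  have gs: "smooth_on UNIV \<gamma>" and gper: "\<And>t. \<gamma> (t + 1) = \<gamma> t" and gN: "\<And>t. \<gamma> t \<in> N"
    using g by (auto simp: smooth_loops_def)
  define p where "p = \<gamma> 0"
  have "p \<in> N" using gN by (simp add: p_def)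
  then obtain c where c: "fpath N p 0 c" using paths_to_0[OF sm conn N0] by blast
  have cs: "smooth_on UNIV c" and cN: "\<And>v. c v \<in> N" and c0: "\<And>v. v \<le> 0 \<Longrightarrow> c v = p"
    and c1: "\<And>v. v \<ge> 1 \<Longrightarrow> c v = 0"
    using c by (auto simp: fpath_def)
  have g1: "\<gamma> 1 = p" using gper[of 0] by (simp add: p_def)
  define \<beta> where "\<beta> t = t * st ((t - h) / h) + (1 - t) * st ((t - a) / h)" for t
  define m where "m = (a + 1) / 2"
  define E where "E u = (if u \<le> a + 3/2 * h then \<gamma> (\<beta> u) else if u \<le> m then c ((u - a - 2 * h) / h)
                         else c ((1 - h - u) / h))" for u
  define \<delta> where "\<delta> t = E (frac t)" for t
  have \<beta>s: "smooth_on UNIV \<beta>"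
    unfolding \<beta>_def[abs_def]
    by (intro smooth_on_add smooth_on_mult smooth_on_ident smooth_st_affine smooth_on_const
              smooth_on_affine[of _ "-1" 1, simplified])
  have \<beta>0: "\<beta> u = 0" if "u \<le> h" for u
  proof -
    have "st ((u - h) / h) = 0" using that h by (intro st_le0) (simp add: divide_nonpos_pos)
    moreover have "st ((u - a) / h) = 0" using that h by (intro st_le0) (simp add: divide_nonpos_pos)
    ultimately show ?thesis by (simp add: \<beta>_def)
  qed
  have \<beta>1: "\<beta> u = 1" if "a + h \<le> u" for u
  proof -
    have "st ((u - h) / h) = 1" using that h a by (intro st_ge1) (simp add: le_divide_eq)
    moreover have "st ((u - a) / h) = 1" using that h by (intro st_ge1) (simp add: le_divide_eq)
    ultimately show ?thesis by (simp add: \<beta>_def)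
  qed
  have \<beta>id: "\<beta> u = u" if "2 * h \<le> u" "u \<le> a" for u
  proof -
    have "st ((u - h) / h) = 1" using that h by (intro st_ge1) (simp add: le_divide_eq)
    moreover have "st ((u - a) / h) = 0" using that h by (intro st_le0) (simp add: divide_nonpos_pos)
    ultimately show ?thesis by (simp add: \<beta>_def)
  qed
  have m1a: "a + 4 * h \<le> m" unfolding m_def using h by (simp add: field_simps)
  have m1b: "m + 3 * h \<le> 1" unfolding m_def using h by (simp add: field_simps)
  note m1 = m1a m1b
  have h1: "h < 1" using h a by linarith
  have Ep: "E u = p" if H: "u < h \<or> (a + h \<le> u \<and> u \<le> a + 2 * h) \<or> 1 - h \<le> u" "u < 1" for u
  proof -
    consider "u < h" | "a + h \<le> u" "u \<le> a + 2 * h" | "1 - h \<le> u" using H(1) by blast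
    then show ?thesis
    proof cases
      case 1 then show ?thesis using h a \<beta>0[of u] by (simp add: E_def p_def)
    next
      case 2
      show ?thesis
      proof (cases "u \<le> a + 3/2 * h")
        case True then show ?thesis using \<beta>1[of u] 2 g1 by (simp add: E_def)
      next
        case False
        have "(u - a - 2 * h) / h \<le> 0" using 2 h by (simp add: divide_nonpos_pos)
        then show ?thesis using False 2 m1 h c0 by (simp add: E_def)
      qed
    next
      case 3
      have "(1 - h - u) / h \<le> 0" using 3 h by (simp add: divide_nonpos_pos)
      then show ?thesis using 3 m1 h c0 by (simp add: E_def)
    qed
  qed
  have E0: "E u = 0" if "a + 3 * h \<le> u" "u \<le> 1 - 2 * h" for u
  proof (cases "u \<le> m")
    case True
    have "(u - a - 2 * h) / h \<ge> 1" using that h by (simp add: le_divide_eq)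
    then show ?thesis using True that h c1 by (simp add: E_def)
  next
    case False
    have "(1 - h - u) / h \<ge> 1" using that h by (simp add: le_divide_eq)
    then show ?thesis using False that h m1 c1 by (simp add: E_def)
  qed
  have Eg: "E u = \<gamma> u" if "2 * h \<le> u" "u \<le> a" for u
    using that h \<beta>id[OF that] by (simp add: E_def)
  have \<delta>s: "smooth_on UNIV \<delta>"
  proof (rule smooth_on_local)
    fix x :: real
    define n where "n = real_of_int \<lfloor>x\<rfloor>"
    have fl: "\<lfloor>t\<rfloor> = \<lfloor>x\<rfloor>" if "n \<le> t" "t < n + 1" for t
      using that by (simp add: n_def floor_eq_iff)
    have fr: "frac t = t - n" if "n \<le> t" "t < n + 1" for t
      using that by (simp add: frac_def n_def floor_eq_iff)
    have u: "0 \<le> x - n" "x - n < 1" using frac_ge_0[of x] frac_lt_1[of x] by (simp_all add: frac_def n_def)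
    consider "x - n < h" | "h \<le> x - n" "x - n \<le> a + 3/2 * h" | "a + 3/2 * h < x - n" "x - n \<le> m" | "m < x - n"
      by linarith
    then show "\<exists>V. open V \<and> x \<in> V \<and> smooth_on V \<delta>"
    proof cases
      case 1
      have "smooth_on {n - h<..<n + h} \<delta>"
      proof (rule smooth_on_locally_const[of _ _ p])
        fix t assume t: "t \<in> {n - h<..<n + h}"
        show "\<delta> t = p"
        proof (cases "n \<le> t")
          case True
          then have "frac t = t - n" using t h m1 a by (intro fr) auto
          then show ?thesis using t True h1 by (auto simp: \<delta>_def intro!: Ep)
        next
          case False
          then have "frac t = t - of_int (\<lfloor>x\<rfloor> - 1)" using t h h1 by (intro frac_in) (auto simp: n_def)
          then have "frac t = t - (n - 1)" by (simp add: n_def)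
          then show ?thesis using t False h by (auto simp: \<delta>_def intro!: Ep)
        qed
      qed simp
      then show ?thesis using 1 u h by (intro exI[of _ "{n - h<..<n + h}"]) auto
    next
      case 2
      have "smooth_on {n + h/2<..<n + a + 2 * h} (\<lambda>t. \<gamma> (\<beta> (1 * t + (- n))))"
        by (rule smooth_on_compose[OF gs smooth_on_compose[OF \<beta>s smooth_on_affine]]) auto
      then have "smooth_on {n + h/2<..<n + a + 2 * h} \<delta>"
      proof (rule smooth_on_cong_on)
        fix t assume t: "t \<in> {n + h/2<..<n + a + 2 * h}"
        then have ft: "frac t = t - n" using h m1 by (intro fr) auto
        show "\<delta> t = \<gamma> (\<beta> (1 * t + - n))"
        proof (cases "t - n \<le> a + 3/2 * h")
          case True then show ?thesis using ft by (simp add: \<delta>_def E_def)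
        next
          case False
          then have "E (t - n) = p" using t h m1 h1 a by (intro Ep) auto
          moreover have "\<gamma> (\<beta> (t - n)) = p" using False \<beta>1[of "t - n"] g1 h by simp
          ultimately show ?thesis using ft by (simp add: \<delta>_def)
        qed
      qed simp
      then show ?thesis using 2 h by (intro exI[of _ "{n + h/2<..<n + a + 2 * h}"]) auto
    next
      case 3
      have "smooth_on {n + a + h<..<n + m + h} (\<lambda>t. c ((1/h) * t + (- (n + a + 2 * h) / h)))"
        by (rule smooth_on_compose[OF cs smooth_on_affine]) auto
      then have "smooth_on {n + a + h<..<n + m + h} \<delta>"
      proof (rule smooth_on_cong_on)
        fix t assume t: "t \<in> {n + a + h<..<n + m + h}"
        then have ft: "frac t = t - n" using h m1 by (intro fr) auto
        have eq: "(1/h) * t + (- (n + a + 2 * h) / h) = (t - n - a - 2 * h) / h"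
          using h by (simp add: field_simps)
        show "\<delta> t = c ((1/h) * t + (- (n + a + 2 * h) / h))"
          unfolding eq
        proof -
          consider "t - n \<le> a + 2 * h" | "a + 2 * h < t - n" "t - n \<le> m" | "m < t - n" by linarith
          then show "\<delta> t = c ((t - n - a - 2 * h) / h)"
          proof cases
            case 1
            then have "E (t - n) = p" using t h m1 h1 a by (intro Ep) auto
            moreover have "(t - n - a - 2 * h) / h \<le> 0" using 1 h by (simp add: divide_nonpos_pos)
            ultimately show ?thesis using ft c0 by (simp add: \<delta>_def)
          next
            case 2
            then have "\<not> t - n \<le> a + 3/2 * h" using h by linarith
            then show ?thesis using ft 2 by (simp add: \<delta>_def E_def diff_diff_eq)
          next
            case 3
            then have "E (t - n) = 0" using t h m1 h1 a by (intro E0) auto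
            moreover have "(t - n - a - 2 * h) / h \<ge> 1" using 3 h m1 by (simp add: le_divide_eq)
            ultimately show ?thesis using ft c1 by (simp add: \<delta>_def)
          qed
        qed
      qed simp
      then show ?thesis using 3 h by (intro exI[of _ "{n + a + h<..<n + m + h}"]) auto
    next
      case 4
      have "smooth_on {n + m - h<..<n + 1} (\<lambda>t. c ((- 1/h) * t + ((1 - h + n) / h)))"
        by (rule smooth_on_compose[OF cs smooth_on_affine]) auto
      then have "smooth_on {n + m - h<..<n + 1} \<delta>"
      proof (rule smooth_on_cong_on)
        fix t assume t: "t \<in> {n + m - h<..<n + 1}"
        then have ft: "frac t = t - n" using h m1 by (intro fr) auto
        have eq: "(- 1/h) * t + ((1 - h + n) / h) = (1 - h - (t - n)) / h"
          using h by (simp add: field_simps)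
        show "\<delta> t = c ((- 1/h) * t + ((1 - h + n) / h))"
          unfolding eq
        proof (cases "t - n \<le> m")
          case True
          then have "E (t - n) = 0" using t h m1 h1 a by (intro E0) auto
          moreover have "(1 - h - (t - n)) / h \<ge> 1" using True h m1 by (simp add: le_divide_eq)
          ultimately show "\<delta> t = c ((1 - h - (t - n)) / h)" using ft c1 by (simp add: \<delta>_def)
        next
          case False
          then show "\<delta> t = c ((1 - h - (t - n)) / h)" using ft t m1 h by (simp add: \<delta>_def E_def)
        qed
      qed simp
      then show ?thesis using 4 u h by (intro exI[of _ "{n + m - h<..<n + 1}"]) auto
    qed
  qed
  have \<delta>per: "\<delta> (t + 1) = \<delta> t" for t by (simp add: \<delta>_def frac_plus1)
  have \<delta>N: "\<delta> t \<in> N" for t using gN cN by (simp add: \<delta>_def E_def)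
  have \<delta>L: "\<delta> \<in> smooth_loops N" using \<delta>s \<delta>per \<delta>N by (simp add: smooth_loops_def)
  have "(if t \<le> a then \<gamma> t else 0) = \<delta> t"
    if "0 \<le> t" "t \<le> 1" "\<not> (t \<le> 2 * h \<or> (a \<le> t \<and> t \<le> a + 3 * h) \<or> 1 - 2 * h \<le> t)" for t
  proof -
    have ft: "frac t = t" using that h by (intro frac_in[of 0, simplified]) auto
    show ?thesis
    proof (cases "t \<le> a")
      case True then show ?thesis using that ft Eg[of t] by (simp add: \<delta>_def)
    next
      case False then show ?thesis using that ft E0[of t] by (simp add: \<delta>_def)
    qed
  qed
  then show ?thesis using \<delta>L by blast
qed



abbreviation "M01 \<equiv> lebesgue_on {0..1::real}"

lemma id_meas01[measurable]: "(\<lambda>x::real. x) \<in> borel_measurable M01"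
  by (rule continuous_imp_measurable_on_sets_lebesgue) (auto intro: continuous_intros)

lemma AE_neq01: "AE x in M01. x \<noteq> c"
proof -
  have "AE x in lebesgue. x \<noteq> c" using AE_completion[OF AE_lborel_singleton] .
  then have "AE x in lebesgue. x \<in> {0..1} \<longrightarrow> x \<noteq> c" by (rule eventually_mono) simp
  then show ?thesis by (subst AE_restrict_space_iff) auto
qed

lemma int_bound:
  fixes h g :: "real \<Rightarrow> real"
  assumes "h \<in> borel_measurable M01" "integrable M01 g" "\<And>t. t \<in> {0..1} \<Longrightarrow> 0 \<le> h t"
    "\<And>t. t \<in> {0..1} \<Longrightarrow> h t \<le> g t"
  shows "integrable M01 h" "integral\<^sup>L M01 h \<le> integral\<^sup>L M01 g"
proof -
  show i: "integrable M01 h"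
  proof (rule Bochner_Integration.integrable_bound[OF assms(2,1)])
    show "AE x in M01. norm (h x) \<le> norm (g x)"
      using assms(3,4) by (intro AE_I2) (force simp: abs_le_iff)
  qed
  show "integral\<^sup>L M01 h \<le> integral\<^sup>L M01 g"
    by (rule integral_mono[OF i assms(2)]) (use assms(4) in simp)
qed

lemma L2_loopsD: "f \<in> L2_loops \<Longrightarrow> f \<in> borel_measurable M01 \<and> integrable M01 (\<lambda>t. (norm (f t))\<^sup>2)"
  by (simp add: L2_loops_def)

lemma sq_ineq: "(norm (x - y :: 'a::real_normed_vector))\<^sup>2 \<le> 2 * (norm x)\<^sup>2 + 2 * (norm y)\<^sup>2"
proof -
  have "norm (x - y) \<le> norm x + norm y" by (rule norm_triangle_ineq4)
  then have "(norm (x - y))\<^sup>2 \<le> (norm x + norm y)\<^sup>2" by (simp add: power_mono)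
  also have "\<dots> \<le> 2 * (norm x)\<^sup>2 + 2 * (norm y)\<^sup>2"
    using sum_squares_bound[of "norm x" "norm y"] by (simp add: power2_eq_square algebra_simps)
  finally show ?thesis .
qed

lemma L2_diff_int:
  assumes "f \<in> L2_loops" "g \<in> L2_loops"
  shows "integrable M01 (\<lambda>t. (norm (f t - g t))\<^sup>2)"
proof -
  have [measurable]: "f \<in> borel_measurable M01" "g \<in> borel_measurable M01"
    using assms by (simp_all add: L2_loops_def)
  have i: "integrable M01 (\<lambda>t. 2 * (norm (f t))\<^sup>2 + 2 * (norm (g t))\<^sup>2)"
    using assms by (simp add: L2_loops_def)
  show ?thesis
    by (rule int_bound(1)[OF _ i]) (auto simp: sq_ineq)
qed

lemma L2_diff: "f \<in> L2_loops \<Longrightarrow> g \<in> L2_loops \<Longrightarrow> (\<lambda>t. f t - g t) \<in> L2_loops"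
  using L2_diff_int[of f g] by (simp add: L2_loops_def borel_measurable_diff)

lemma L2_dist_sym: "L2_dist f g = L2_dist g f"
  by (simp add: L2_dist_def norm_minus_commute)

lemma L2_dist_nonneg: "0 \<le> L2_dist f g"
  by (simp add: L2_dist_def)

lemma L2_dist_self: "L2_dist f f = 0"
  by (simp add: L2_dist_def)

lemma quad_nonneg_imp:
  fixes A B C :: real
  assumes "\<And>l. 0 \<le> A - 2 * l * C + l\<^sup>2 * B" "0 \<le> C" "0 \<le> B"
  shows "C\<^sup>2 \<le> A * B"
proof (cases "B > 0")
  case True
  have "0 \<le> A - 2 * (C / B) * C + (C / B)\<^sup>2 * B" by (rule assms(1))
  also have "\<dots> = A - C\<^sup>2 / B" using True by (simp add: power2_eq_square field_simps)
  finally have "C\<^sup>2 / B \<le> A" by simp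
  then show ?thesis using True by (simp add: divide_le_eq mult.commute)
next
  case False
  then have B0: "B = 0" using assms(3) by simp
  show ?thesis
  proof (cases "C > 0")
    case True
    have "0 \<le> A - 2 * ((A + 1) / (2 * C)) * C + ((A + 1) / (2 * C))\<^sup>2 * B" by (rule assms(1))
    also have "\<dots> = -1" using True B0 by (simp add: field_simps)
    finally show ?thesis by simp
  next
    case False
    then have "C = 0" using assms(2) by simp
    then show ?thesis using B0 by simp
  qed
qed

lemma L2_triangle:
  assumes f: "f \<in> L2_loops" and g: "g \<in> L2_loops" and h: "h \<in> L2_loops"
  shows "L2_dist f h \<le> L2_dist f g + L2_dist g h"
proof -
  have [measurable]: "f \<in> borel_measurable M01" "g \<in> borel_measurable M01" "h \<in> borel_measurable M01"
    using f g h by (simp_all add: L2_loops_def)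
  define u where "u t = norm (f t - g t)" for t
  define v where "v t = norm (g t - h t)" for t
  have [measurable]: "u \<in> borel_measurable M01" "v \<in> borel_measurable M01"
    unfolding u_def[abs_def] v_def[abs_def] by measurable
  have iu: "integrable M01 (\<lambda>t. (u t)\<^sup>2)" unfolding u_def using L2_diff_int[OF f g] .
  have iv: "integrable M01 (\<lambda>t. (v t)\<^sup>2)" unfolding v_def using L2_diff_int[OF g h] .
  have iuv: "integrable M01 (\<lambda>t. u t * v t)"
  proof (rule int_bound(1)[OF _ Bochner_Integration.integrable_add[OF iu iv]])
    fix t
    have "0 \<le> (u t - v t)\<^sup>2" by simp
    moreover have "0 \<le> u t" "0 \<le> v t" by (simp_all add: u_def v_def)
    ultimately have p: "0 \<le> u t * v t" "2 * (u t * v t) \<le> (u t)\<^sup>2 + (v t)\<^sup>2"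
      by (simp_all add: power2_eq_square algebra_simps)
    then show "u t * v t \<le> (u t)\<^sup>2 + (v t)\<^sup>2" by linarith
    show "0 \<le> u t * v t" by (simp add: u_def v_def)
  qed measurable
  define A where "A = integral\<^sup>L M01 (\<lambda>t. (u t)\<^sup>2)"
  define B where "B = integral\<^sup>L M01 (\<lambda>t. (v t)\<^sup>2)"
  define C where "C = integral\<^sup>L M01 (\<lambda>t. u t * v t)"
  have A0: "0 \<le> A" unfolding A_def by (rule integral_nonneg_AE) simp
  have B0: "0 \<le> B" unfolding B_def by (rule integral_nonneg_AE) simp
  have C0: "0 \<le> C" unfolding C_def by (rule integral_nonneg_AE) (simp add: u_def v_def)
  have quad: "0 \<le> A - 2 * l * C + l\<^sup>2 * B" for l
  proof -
    have eq: "(\<lambda>t. (u t - l * v t)\<^sup>2) = (\<lambda>t. (u t)\<^sup>2 - (2 * l) * (u t * v t) + l\<^sup>2 * (v t)\<^sup>2)"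
      by (simp add: power2_eq_square algebra_simps)
    have "0 \<le> integral\<^sup>L M01 (\<lambda>t. (u t - l * v t)\<^sup>2)" by (rule integral_nonneg_AE) simp
    also have "\<dots> = A - 2 * l * C + l\<^sup>2 * B"
      unfolding eq A_def B_def C_def
      using iu iv iuv by (simp add: integral_add integral_diff integral_mult_right)
    finally show ?thesis .
  qed
  have "C\<^sup>2 \<le> A * B" by (rule quad_nonneg_imp[OF quad C0 B0])
  then have CC: "C \<le> sqrt A * sqrt B" by (simp add: real_le_rsqrt real_sqrt_mult[symmetric])
  have "integral\<^sup>L M01 (\<lambda>t. (norm (f t - h t))\<^sup>2) \<le> integral\<^sup>L M01 (\<lambda>t. (u t)\<^sup>2 + 2 * (u t * v t) + (v t)\<^sup>2)"
  proof (rule int_bound(2))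
    show "integrable M01 (\<lambda>t. (u t)\<^sup>2 + 2 * (u t * v t) + (v t)\<^sup>2)"
      using iu iv iuv by simp
    fix t
    have "norm (f t - h t) \<le> u t + v t" unfolding u_def v_def
      using norm_triangle_ineq[of "f t - g t" "g t - h t"] by simp
    then have "(norm (f t - h t))\<^sup>2 \<le> (u t + v t)\<^sup>2" by (simp add: power_mono)
    then show "(norm (f t - h t))\<^sup>2 \<le> (u t)\<^sup>2 + 2 * (u t * v t) + (v t)\<^sup>2"
      by (simp add: power2_eq_square algebra_simps)
  qed (auto)
  also have "\<dots> = A + 2 * C + B"
    unfolding A_def B_def C_def using iu iv iuv by (simp add: integral_add integral_mult_right)
  also have "\<dots> \<le> (sqrt A + sqrt B)\<^sup>2"
    using CC A0 B0 by (simp add: power2_eq_square algebra_simps)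
  finally have "sqrt (integral\<^sup>L M01 (\<lambda>t. (norm (f t - h t))\<^sup>2)) \<le> sqrt ((sqrt A + sqrt B)\<^sup>2)"
    using real_sqrt_le_mono by blast
  also have "\<dots> = sqrt A + sqrt B" using A0 B0 by simp
  finally show ?thesis unfolding L2_dist_def A_def B_def u_def v_def .
qed



definition cutf :: "real \<Rightarrow> (real \<Rightarrow> 'a::real_normed_vector) \<Rightarrow> real \<Rightarrow> 'a" where
  "cutf s f = (\<lambda>t. if s = 0 \<or> (s < 1 \<and> t \<le> 1 - s) then f t else 0)"

lemma cutf_meas[measurable]: "f \<in> borel_measurable M01 \<Longrightarrow> cutf s f \<in> borel_measurable M01"
proof -
  assume [measurable]: "f \<in> borel_measurable M01"
  have "(\<lambda>t. (if s = 0 \<or> (s < 1 \<and> t \<le> 1 - s) then 1 else 0 :: real) *\<^sub>R f t) \<in> borel_measurable M01"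
    by measurable
  moreover have "(\<lambda>t. (if s = 0 \<or> (s < 1 \<and> t \<le> 1 - s) then 1 else 0 :: real) *\<^sub>R f t) = cutf s f"
    by (auto simp: cutf_def)
  ultimately show ?thesis by simp
qed

lemma ind_meas01[measurable]: "(\<lambda>t. indicator {a..b::real} t :: real) \<in> borel_measurable M01"
proof -
  have "(\<lambda>t. if a \<le> t \<and> t \<le> b then 1 else 0 :: real) \<in> borel_measurable M01" by measurable
  moreover have "(\<lambda>t. if a \<le> t \<and> t \<le> b then 1 else 0 :: real) = (\<lambda>t. indicator {a..b} t)"
    by (auto simp: indicator_def)
  ultimately show ?thesis by simp
qed

lemma cut_L2: "f \<in> L2_loops \<Longrightarrow> cutf s f \<in> L2_loops"
proof -
  assume f: "f \<in> L2_loops"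
  then have [measurable]: "f \<in> borel_measurable M01" and i: "integrable M01 (\<lambda>t. (norm (f t))\<^sup>2)"
    by (simp_all add: L2_loops_def)
  have "integrable M01 (\<lambda>t. (norm (cutf s f t))\<^sup>2)"
    by (rule int_bound(1)[OF _ i]) (auto simp: cutf_def)
  then show ?thesis by (simp add: L2_loops_def)
qed

lemma cut_dist_le:
  assumes "f \<in> L2_loops" "g \<in> L2_loops"
  shows "L2_dist (cutf s f) (cutf s g) \<le> L2_dist f g"
proof -
  have [measurable]: "f \<in> borel_measurable M01" "g \<in> borel_measurable M01"
    using assms by (simp_all add: L2_loops_def)
  have "integral\<^sup>L M01 (\<lambda>t. (norm (cutf s f t - cutf s g t))\<^sup>2) \<le> integral\<^sup>L M01 (\<lambda>t. (norm (f t - g t))\<^sup>2)"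
    by (rule int_bound(2)[OF _ L2_diff_int[OF assms]]) (auto simp: cutf_def)
  then show ?thesis unfolding L2_dist_def by (rule real_sqrt_le_mono)
qed

lemma smooth_loop_L2:
  assumes "\<gamma> \<in> smooth_loops N" "\<And>x. x \<in> N \<Longrightarrow> norm x \<le> R"
  shows "\<gamma> \<in> L2_loops"
proof -
  have "continuous_on UNIV \<gamma>" using assms(1) smooth_on_Ck[of UNIV \<gamma> 0] by (simp add: smooth_loops_def)
  then have c: "continuous_on {0..1} \<gamma>" by (rule continuous_on_subset) simp
  have [measurable]: "\<gamma> \<in> borel_measurable M01"
    by (rule continuous_imp_measurable_on_sets_lebesgue[OF c]) simp
  have "integrable M01 (\<lambda>t. (norm (\<gamma> t))\<^sup>2)"
  proof (rule int_bound(1)[OF _ Lebesgue_Measure.integrable_const_ivl[of 0 1 "R\<^sup>2"]])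
    fix t
    have "\<gamma> t \<in> N" using assms(1) by (simp add: smooth_loops_def)
    then have "norm (\<gamma> t) \<le> R" by (rule assms(2))
    then show "(norm (\<gamma> t))\<^sup>2 \<le> R\<^sup>2" by (simp add: power_mono)
  qed auto
  then show ?thesis by (simp add: L2_loops_def)
qed

lemma small_ivl_integral:
  fixes g :: "real \<Rightarrow> real"
  assumes [measurable]: "g \<in> borel_measurable M01" and ig: "integrable M01 g" and g0: "\<And>t. 0 \<le> g t"
    and e: "e > 0"
  shows "\<exists>\<theta>>0. \<forall>\<theta>'. 0 < \<theta>' \<and> \<theta>' \<le> \<theta> \<longrightarrow> integral\<^sup>L M01 (\<lambda>t. indicator {c - \<theta>'..c + \<theta>'} t * g t) < e"
proof -
  define S where "S n t = indicator {c - 1 / real (Suc n)..c + 1 / real (Suc n)} t * g t" for n t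
  have [measurable]: "S n \<in> borel_measurable M01" for n unfolding S_def by measurable
  have lim: "(\<lambda>n. integral\<^sup>L M01 (S n)) \<longlonglongrightarrow> integral\<^sup>L M01 (\<lambda>t. 0::real)"
  proof (rule integral_dominated_convergence[where w = g])
    show "AE t in M01. (\<lambda>n. S n t) \<longlonglongrightarrow> 0"
      using AE_neq01[of c]
    proof (rule eventually_mono)
      fix t assume "t \<noteq> c"
      then have "0 < \<bar>t - c\<bar>" by simp
      then obtain n0 where n0: "inverse (real (Suc n0)) < \<bar>t - c\<bar>" using reals_Archimedean by blast
      have "S n t = 0" if "n \<ge> n0" for n
      proof -
        have "1 / real (Suc n) \<le> 1 / real (Suc n0)" using that by (simp add: frac_le)
        then have "1 / real (Suc n) < \<bar>t - c\<bar>" using n0 by (simp add: inverse_eq_divide)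
        then have "t \<notin> {c - 1 / real (Suc n)..c + 1 / real (Suc n)}" by auto
        then show ?thesis by (simp add: S_def)
      qed
      then show "(\<lambda>n. S n t) \<longlonglongrightarrow> 0"
        by (intro tendsto_eventually) (auto simp: eventually_sequentially)
    qed
    show "AE t in M01. norm (S n t) \<le> g t" for n
      using g0 by (intro AE_I2) (simp add: S_def indicator_def)
  qed (use ig in auto)
  then have "eventually (\<lambda>n. integral\<^sup>L M01 (S n) < e) sequentially"
    using e by (intro order_tendstoD(2)) auto
  then obtain n where n: "integral\<^sup>L M01 (S n) < e" by (auto simp: eventually_sequentially)
  show ?thesis
  proof (intro exI[of _ "1 / real (Suc n)"] conjI allI impI)
    show "0 < 1 / real (Suc n)" by simp
    fix \<theta>' assume th: "0 < \<theta>' \<and> \<theta>' \<le> 1 / real (Suc n)"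
    have iS: "integrable M01 (S n)"
      by (rule int_bound(1)[OF _ ig]) (auto simp: S_def indicator_def g0)
    have "integral\<^sup>L M01 (\<lambda>t. indicator {c - \<theta>'..c + \<theta>'} t * g t) \<le> integral\<^sup>L M01 (S n)"
    proof (rule int_bound(2)[OF _ iS])
      fix t
      show "0 \<le> indicator {c - \<theta>'..c + \<theta>'} t * g t" using g0 by simp
      show "indicator {c - \<theta>'..c + \<theta>'} t * g t \<le> S n t"
        using th g0[of t] by (auto simp: S_def indicator_def)
    qed measurable
    then show "integral\<^sup>L M01 (\<lambda>t. indicator {c - \<theta>'..c + \<theta>'} t * g t) < e" using n by simp
  qed
qed

lemma zero_loop: "0 \<in> N \<Longrightarrow> (\<lambda>t. 0) \<in> smooth_loops N"
  by (simp add: smooth_loops_def smooth_on_const)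

lemma one_meas01[measurable]: "(\<lambda>t. 1::real) \<in> borel_measurable M01" by simp

lemma cutf_in:
  fixes N :: "'a::euclidean_space set"
  assumes sm: "smooth_submanifold N" and conn: "connected N" and N0: "0 \<in> N"
    and R: "\<And>x. x \<in> N \<Longrightarrow> norm x \<le> R"
    and f: "f \<in> L2_loops_in N" and s: "0 \<le> s" "s \<le> 1"
  shows "cutf s f \<in> L2_loops_in N"
proof -
  have fL: "f \<in> L2_loops" and fa: "\<And>e. e > 0 \<Longrightarrow> \<exists>\<gamma>\<in>smooth_loops N. L2_dist f \<gamma> < e"
    using f by (auto simp: L2_loops_in_def)
  have R0: "0 \<le> R" using R[OF N0] by simp
  have cL: "cutf s f \<in> L2_loops" by (rule cut_L2[OF fL])
  have "\<exists>\<delta>\<in>smooth_loops N. L2_dist (cutf s f) \<delta> < e" if e: "e > 0" for e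
  proof -
    consider "s = 0" | "s = 1" | "0 < s" "s < 1" using s by linarith
    then show ?thesis
    proof cases
      case 1
      then have "cutf s f = f" by (simp add: cutf_def)
      then show ?thesis using fa[OF e] by simp
    next
      case 2
      then have "cutf s f = (\<lambda>t. 0)" by (simp add: cutf_def)
      then show ?thesis using zero_loop[OF N0] e by (intro bexI[of _ "\<lambda>t. 0"]) (auto simp: L2_dist_def)
    next
      case 3
      obtain \<gamma> where \<gamma>: "\<gamma> \<in> smooth_loops N" "L2_dist f \<gamma> < e / 2" using fa[of "e/2"] e by auto
      have \<gamma>L: "\<gamma> \<in> L2_loops" using smooth_loop_L2[OF \<gamma>(1) R] .
      define a where "a = 1 - s"
      have a: "0 < a" "a < 1" using 3 by (auto simp: a_def)
      define \<epsilon> where "\<epsilon> = e\<^sup>2 / (48 * (R\<^sup>2 + 1))"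
      have R2: "0 \<le> R\<^sup>2" by simp
      have R21: "R\<^sup>2 + 1 > 0" using R2 by linarith
      have "48 * (R\<^sup>2 + 1) > 0" using R21 by (intro mult_pos_pos) auto
      then have \<epsilon>: "\<epsilon> > 0" using e unfolding \<epsilon>_def by (intro divide_pos_pos) auto
      have ione: "integrable M01 (\<lambda>t. 1::real)" by (rule Lebesgue_Measure.integrable_const_ivl)
      have J: "\<exists>\<theta>>0. \<forall>\<theta>'. 0 < \<theta>' \<and> \<theta>' \<le> \<theta> \<longrightarrow> integral\<^sup>L M01 (\<lambda>t. indicator {c - \<theta>'..c + \<theta>'} t * 1) < \<epsilon>" for c
        by (rule small_ivl_integral[OF one_meas01 ione _ \<epsilon>]) simp
      obtain \<theta>0 where \<theta>0: "\<theta>0 > 0" "\<And>\<theta>'. 0 < \<theta>' \<and> \<theta>' \<le> \<theta>0 \<Longrightarrow> integral\<^sup>L M01 (\<lambda>t. indicator {0 - \<theta>'..0 + \<theta>'} t * 1) < \<epsilon>"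
        using J[of 0] by blast
      obtain \<theta>a where \<theta>a: "\<theta>a > 0" "\<And>\<theta>'. 0 < \<theta>' \<and> \<theta>' \<le> \<theta>a \<Longrightarrow> integral\<^sup>L M01 (\<lambda>t. indicator {a - \<theta>'..a + \<theta>'} t * 1) < \<epsilon>"
        using J[of a] by blast
      obtain \<theta>1 where \<theta>1: "\<theta>1 > 0" "\<And>\<theta>'. 0 < \<theta>' \<and> \<theta>' \<le> \<theta>1 \<Longrightarrow> integral\<^sup>L M01 (\<lambda>t. indicator {1 - \<theta>'..1 + \<theta>'} t * 1) < \<epsilon>"
        using J[of 1] by blast
      define h where "h = min (min (\<theta>0/3) (\<theta>a/3)) (min (\<theta>1/3) (min ((1-a)/10) (a/4)))"
      have h0: "0 < h" using a \<theta>0(1) \<theta>a(1) \<theta>1(1) unfolding h_def by simp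
      have hb: "h \<le> (1 - a) / 10" "h \<le> a / 4" "h \<le> \<theta>0 / 3" "h \<le> \<theta>a / 3" "h \<le> \<theta>1 / 3"
        unfolding h_def by (meson min.cobounded1 min.cobounded2 order_trans)+
      have h: "0 < h" "10 * h \<le> 1 - a" "4 * h \<le> a" "3 * h \<le> \<theta>0" "3 * h \<le> \<theta>a" "3 * h \<le> \<theta>1"
        using h0 hb by (simp_all add: field_simps)
      obtain \<delta> where \<delta>: "\<delta> \<in> smooth_loops N"
        "\<And>t. 0 \<le> t \<Longrightarrow> t \<le> 1 \<Longrightarrow> (t \<le> 2 * h \<or> (a \<le> t \<and> t \<le> a + 3 * h) \<or> 1 - 2 * h \<le> t) \<or>
           (if t \<le> a then \<gamma> t else 0) = \<delta> t"
        using cut_approx_pointwise[OF sm conn N0 \<gamma>(1) a h(1,2,3)] by blast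
      have \<delta>L: "\<delta> \<in> L2_loops" using smooth_loop_L2[OF \<delta>(1) R] .
      have cgL: "cutf s \<gamma> \<in> L2_loops" by (rule cut_L2[OF \<gamma>L])
      define I where "I c t = indicator {c - 3 * h..c + 3 * h} t * (1::real)" for c t
      have [measurable]: "I c \<in> borel_measurable M01" for c unfolding I_def by measurable
      have iI: "integrable M01 (I c)" for c
        by (rule int_bound(1)[OF _ ione]) (auto simp: I_def indicator_def)
      have JI0: "integral\<^sup>L M01 (I 0) < \<epsilon>" unfolding I_def by (rule \<theta>0(2)) (use h in auto)
      have JIa: "integral\<^sup>L M01 (I a) < \<epsilon>" unfolding I_def by (rule \<theta>a(2)) (use h in auto)
      have JI1: "integral\<^sup>L M01 (I 1) < \<epsilon>" unfolding I_def by (rule \<theta>1(2)) (use h in auto)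
      have [measurable]: "\<gamma> \<in> borel_measurable M01" "\<delta> \<in> borel_measurable M01"
        using \<gamma>L \<delta>L by (simp_all add: L2_loops_def)
      have bound: "integral\<^sup>L M01 (\<lambda>t. (norm (cutf s \<gamma> t - \<delta> t))\<^sup>2)
          \<le> integral\<^sup>L M01 (\<lambda>t. 4 * R\<^sup>2 * (I 0 t + I a t + I 1 t))"
      proof (rule int_bound(2))
        show "integrable M01 (\<lambda>t. 4 * R\<^sup>2 * (I 0 t + I a t + I 1 t))"
          using iI by simp
        fix t :: real assume t: "t \<in> {0..1}"
        have ct: "cutf s \<gamma> t = (if t \<le> a then \<gamma> t else 0)" using 3 by (simp add: cutf_def a_def)
        have nI: "0 \<le> I c t" for c by (simp add: I_def)
        show "0 \<le> (norm (cutf s \<gamma> t - \<delta> t))\<^sup>2" by simp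
        show "(norm (cutf s \<gamma> t - \<delta> t))\<^sup>2 \<le> 4 * R\<^sup>2 * (I 0 t + I a t + I 1 t)"
        proof (cases "(if t \<le> a then \<gamma> t else 0) = \<delta> t")
          case True
          then show ?thesis using ct nI R0 by simp
        next
          case False
          then have bad: "t \<le> 2 * h \<or> (a \<le> t \<and> t \<le> a + 3 * h) \<or> 1 - 2 * h \<le> t" using \<delta>(2)[of t] t by auto
          then have "1 \<le> I 0 t + I a t + I 1 t" using t h nI by (auto simp: I_def indicator_def)
          moreover have "norm (cutf s \<gamma> t) \<le> R"
            using ct R[of "\<gamma> t"] \<gamma>(1) R0 by (auto simp: smooth_loops_def)
          moreover have "norm (\<delta> t) \<le> R" using R[of "\<delta> t"] \<delta>(1) by (auto simp: smooth_loops_def)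
          ultimately have "norm (cutf s \<gamma> t - \<delta> t) \<le> 2 * R" "1 \<le> I 0 t + I a t + I 1 t"
            using norm_triangle_ineq4[of "cutf s \<gamma> t" "\<delta> t"] by auto
          then have "(norm (cutf s \<gamma> t - \<delta> t))\<^sup>2 \<le> (2 * R)\<^sup>2"
            by (intro power_mono) auto
          then have "(norm (cutf s \<gamma> t - \<delta> t))\<^sup>2 \<le> (2 * R)\<^sup>2 * 1" by simp
          also have "\<dots> \<le> (2 * R)\<^sup>2 * (I 0 t + I a t + I 1 t)"
            using \<open>1 \<le> I 0 t + I a t + I 1 t\<close> by (intro mult_left_mono) auto
          finally show ?thesis by (simp add: power2_eq_square)
        qed
      qed measurable
      also have "\<dots> = 4 * R\<^sup>2 * (integral\<^sup>L M01 (I 0) + integral\<^sup>L M01 (I a) + integral\<^sup>L M01 (I 1))"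
        using iI by simp
      also have "\<dots> \<le> 4 * R\<^sup>2 * (3 * \<epsilon>)"
        using JI0 JIa JI1 by (intro mult_left_mono) auto
      also have "\<dots> < (e / 2)\<^sup>2"
      proof -
        have "4 * R\<^sup>2 * (3 * \<epsilon>) = (e / 2)\<^sup>2 * (R\<^sup>2 / (R\<^sup>2 + 1))"
          using R21 by (simp add: \<epsilon>_def field_simps)
        also have "\<dots> < (e / 2)\<^sup>2 * 1"
          using e R21 by (intro mult_strict_left_mono) auto
        finally show ?thesis by simp
      qed
      finally have "sqrt (integral\<^sup>L M01 (\<lambda>t. (norm (cutf s \<gamma> t - \<delta> t))\<^sup>2)) < sqrt ((e / 2)\<^sup>2)"
        by (rule real_sqrt_less_mono)
      also have "sqrt ((e / 2)\<^sup>2) = e / 2" using e by simp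
      finally have "L2_dist (cutf s \<gamma>) \<delta> < e / 2" unfolding L2_dist_def .
      moreover have "L2_dist (cutf s f) (cutf s \<gamma>) \<le> L2_dist f \<gamma>" by (rule cut_dist_le[OF fL \<gamma>L])
      moreover have "L2_dist (cutf s f) \<delta> \<le> L2_dist (cutf s f) (cutf s \<gamma>) + L2_dist (cutf s \<gamma>) \<delta>"
        by (rule L2_triangle[OF cL cgL \<delta>L])
      ultimately have "L2_dist (cutf s f) \<delta> < e" using \<gamma>(2) by linarith
      then show ?thesis using \<delta>(1) by blast
    qed
  qed
  then show ?thesis using cL by (simp add: L2_loops_in_def)
qed



lemma pm_istop:
  fixes d :: "'a \<Rightarrow> 'a \<Rightarrow> real"
  shows "istopology (\<lambda>U. U \<subseteq> X \<and> (\<forall>x\<in>U. \<exists>e>0. \<forall>y\<in>X. d x y < e \<longrightarrow> y \<in> U))"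
proof -
  have A: "S \<inter> T \<subseteq> X \<and> (\<forall>x\<in>S \<inter> T. \<exists>e>0. \<forall>y\<in>X. d x y < e \<longrightarrow> y \<in> S \<inter> T)"
    if S: "S \<subseteq> X \<and> (\<forall>x\<in>S. \<exists>e>0. \<forall>y\<in>X. d x y < e \<longrightarrow> y \<in> S)"
     and T: "T \<subseteq> X \<and> (\<forall>x\<in>T. \<exists>e>0. \<forall>y\<in>X. d x y < e \<longrightarrow> y \<in> T)" for S T
  proof (intro conjI ballI)
    show "S \<inter> T \<subseteq> X" using S by blast
    fix x assume x: "x \<in> S \<inter> T"
    obtain e1 where e1: "e1 > 0" "\<forall>y\<in>X. d x y < e1 \<longrightarrow> y \<in> S" using S x by blast
    obtain e2 where e2: "e2 > 0" "\<forall>y\<in>X. d x y < e2 \<longrightarrow> y \<in> T" using T x by blast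
    show "\<exists>e>0. \<forall>y\<in>X. d x y < e \<longrightarrow> y \<in> S \<inter> T"
    proof (intro exI[of _ "min e1 e2"] conjI ballI impI)
      show "0 < min e1 e2" using e1 e2 by simp
      fix y assume "y \<in> X" "d x y < min e1 e2"
      then show "y \<in> S \<inter> T" using e1 e2 by simp
    qed
  qed
  have B: "\<Union>K \<subseteq> X \<and> (\<forall>x\<in>\<Union>K. \<exists>e>0. \<forall>y\<in>X. d x y < e \<longrightarrow> y \<in> \<Union>K)"
    if K: "\<forall>U\<in>K. U \<subseteq> X \<and> (\<forall>x\<in>U. \<exists>e>0. \<forall>y\<in>X. d x y < e \<longrightarrow> y \<in> U)" for K :: "'a set set"
  proof (intro conjI ballI)
    show "\<Union>K \<subseteq> X" using K by blast
    fix x assume "x \<in> \<Union>K"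
    then obtain U where U: "U \<in> K" "x \<in> U" by blast
    then obtain e where "e > 0" "\<forall>y\<in>X. d x y < e \<longrightarrow> y \<in> U" using K by blast
    then show "\<exists>e>0. \<forall>y\<in>X. d x y < e \<longrightarrow> y \<in> \<Union>K" using U by blast
  qed
  show ?thesis unfolding istopology_def using A B by blast
qed

lemma pm_openin: "openin (pmetric_topology X d) U \<longleftrightarrow> U \<subseteq> X \<and> (\<forall>x\<in>U. \<exists>e>0. \<forall>y\<in>X. d x y < e \<longrightarrow> y \<in> U)"
  unfolding pmetric_topology_def topology_inverse'[OF pm_istop] by (rule refl)

lemma pm_topspace: "topspace (pmetric_topology X d) = X"
proof
  show "topspace (pmetric_topology X d) \<subseteq> X"
    unfolding topspace_def pm_openin by blast
  have "openin (pmetric_topology X d) X" unfolding pm_openin by (auto intro: exI[of _ 1])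
  then show "X \<subseteq> topspace (pmetric_topology X d)" unfolding topspace_def by blast
qed

lemma L2_in_sub: "L2_loops_in N \<subseteq> L2_loops"
  by (auto simp: L2_loops_in_def)

lemma ball_open:
  assumes "f0 \<in> L2_loops_in N"
  shows "openin (pmetric_topology (L2_loops_in N) L2_dist) {f \<in> L2_loops_in N. L2_dist f0 f < r}"
  unfolding pm_openin
proof (intro conjI ballI)
  show "{f \<in> L2_loops_in N. L2_dist f0 f < r} \<subseteq> L2_loops_in N" by blast
  fix x assume x: "x \<in> {f \<in> L2_loops_in N. L2_dist f0 f < r}"
  show "\<exists>e>0. \<forall>y\<in>L2_loops_in N. L2_dist x y < e \<longrightarrow> y \<in> {f \<in> L2_loops_in N. L2_dist f0 f < r}"
  proof (intro exI[of _ "r - L2_dist f0 x"] conjI ballI impI)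
    show "0 < r - L2_dist f0 x" using x by simp
    fix y assume y: "y \<in> L2_loops_in N" and d: "L2_dist x y < r - L2_dist f0 x"
    have "L2_dist f0 y \<le> L2_dist f0 x + L2_dist x y"
      using L2_triangle assms x y L2_in_sub by blast
    then show "y \<in> {f \<in> L2_loops_in N. L2_dist f0 f < r}" using y d by simp
  qed
qed

lemma cut_cont_est:
  assumes f0: "f0 \<in> L2_loops" and f: "f \<in> L2_loops"
    and s0: "0 \<le> s0" "s0 \<le> 1" and s: "0 \<le> s" "s \<le> 1" and th: "\<bar>s - s0\<bar> < \<theta>"
  shows "integral\<^sup>L M01 (\<lambda>t. (norm (cutf s0 f0 t - cutf s f t))\<^sup>2)
     \<le> 2 * integral\<^sup>L M01 (\<lambda>t. (norm (f0 t - f t))\<^sup>2)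
       + 2 * integral\<^sup>L M01 (\<lambda>t. indicator {1 - s0 - \<theta>..1 - s0 + \<theta>} t * (norm (f0 t))\<^sup>2)"
proof -
  have [measurable]: "f0 \<in> borel_measurable M01" "f \<in> borel_measurable M01"
    using f0 f by (simp_all add: L2_loops_def)
  have i1: "integrable M01 (\<lambda>t. (norm (f0 t - f t))\<^sup>2)" by (rule L2_diff_int[OF f0 f])
  have i0: "integrable M01 (\<lambda>t. (norm (f0 t))\<^sup>2)" using f0 by (simp add: L2_loops_def)
  have i2: "integrable M01 (\<lambda>t. indicator {1 - s0 - \<theta>..1 - s0 + \<theta>} t * (norm (f0 t))\<^sup>2)"
    by (rule int_bound(1)[OF _ i0]) (auto simp: indicator_def)
  have "integral\<^sup>L M01 (\<lambda>t. (norm (cutf s0 f0 t - cutf s f t))\<^sup>2)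
     \<le> integral\<^sup>L M01 (\<lambda>t. 2 * (norm (f0 t - f t))\<^sup>2
       + 2 * (indicator {1 - s0 - \<theta>..1 - s0 + \<theta>} t * (norm (f0 t))\<^sup>2))"
  proof (rule int_bound(2))
    show "integrable M01 (\<lambda>t. 2 * (norm (f0 t - f t))\<^sup>2
       + 2 * (indicator {1 - s0 - \<theta>..1 - s0 + \<theta>} t * (norm (f0 t))\<^sup>2))"
      using i1 i2 by simp
    fix t :: real assume t: "t \<in> {0..1}"
    define P0 where "P0 = (s0 = 0 \<or> (s0 < 1 \<and> t \<le> 1 - s0))"
    define P1 where "P1 = (s = 0 \<or> (s < 1 \<and> t \<le> 1 - s))"
    have c0: "cutf s0 f0 t = (if P0 then f0 t else 0)" by (simp add: cutf_def P0_def)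
    have c1: "cutf s f t = (if P1 then f t else 0)" by (simp add: cutf_def P1_def)
    have n1: "0 \<le> (norm (f0 t - f t))\<^sup>2" "0 \<le> indicator {1 - s0 - \<theta>..1 - s0 + \<theta>} t * (norm (f0 t))\<^sup>2"
      by simp_all
    show "0 \<le> (norm (cutf s0 f0 t - cutf s f t))\<^sup>2" by simp
    show "(norm (cutf s0 f0 t - cutf s f t))\<^sup>2 \<le> 2 * (norm (f0 t - f t))\<^sup>2
       + 2 * (indicator {1 - s0 - \<theta>..1 - s0 + \<theta>} t * (norm (f0 t))\<^sup>2)"
    proof (cases P0; cases P1)
      assume "P0" "P1"
      then show ?thesis using c0 c1 n1 by simp
    next
      assume "\<not> P0" "\<not> P1"
      then show ?thesis using c0 c1 n1 by simp
    next
      assume p: "P0" "\<not> P1"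
      have "t \<le> 1 - s0" using p(1) t unfolding P0_def by auto
      moreover have "1 - s \<le> t" using p(2) t s unfolding P1_def by auto
      ultimately have "t \<in> {1 - s0 - \<theta>..1 - s0 + \<theta>}" using th by auto
      then show ?thesis using c0 c1 p n1 by simp
    next
      assume p: "\<not> P0" "P1"
      have "1 - s0 \<le> t" using p(1) t s0 unfolding P0_def by auto
      moreover have "t \<le> 1 - s" using p(2) t unfolding P1_def by auto
      ultimately have "t \<in> {1 - s0 - \<theta>..1 - s0 + \<theta>}" using th by auto
      moreover have "(norm (f t))\<^sup>2 \<le> 2 * (norm (f0 t - f t))\<^sup>2 + 2 * (norm (f0 t))\<^sup>2"
        using sq_ineq[of "f t - f0 t" "- f0 t"] by (simp add: norm_minus_commute)
      ultimately show ?thesis using c0 c1 p by simp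
    qed
  qed measurable
  also have "\<dots> = 2 * integral\<^sup>L M01 (\<lambda>t. (norm (f0 t - f t))\<^sup>2)
       + 2 * integral\<^sup>L M01 (\<lambda>t. indicator {1 - s0 - \<theta>..1 - s0 + \<theta>} t * (norm (f0 t))\<^sup>2)"
    using i1 i2 by simp
  finally show ?thesis .
qed

lemma cut_cont:
  fixes N :: "'a::euclidean_space set"
  assumes sm: "smooth_submanifold N" and conn: "connected N" and N0: "0 \<in> N"
    and R: "\<And>x. x \<in> N \<Longrightarrow> norm x \<le> R"
  shows "continuous_map (prod_topology (top_of_set {0..1}) (pmetric_topology (L2_loops_in N) L2_dist))
           (pmetric_topology (L2_loops_in N) L2_dist) (\<lambda>(s,f). cutf s f)"
  unfolding continuous_map_def
proof (intro conjI allI impI)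
  let ?Y = "L2_loops_in N"
  let ?X = "pmetric_topology ?Y L2_dist"
  show "(\<lambda>(s,f). cutf s f) \<in> topspace (prod_topology (top_of_set {0..1}) ?X) \<rightarrow> topspace ?X"
    unfolding topspace_prod_topology pm_topspace
    using cutf_in[OF sm conn N0 R] by auto
  fix U assume U: "openin ?X U"
  show "openin (prod_topology (top_of_set {0..1}) ?X)
          {x \<in> topspace (prod_topology (top_of_set {0..1}) ?X). (case x of (s, f) \<Rightarrow> cutf s f) \<in> U}"
    unfolding openin_prod_topology_alt
  proof (intro allI impI)
    fix s0 f0
    assume "(s0, f0) \<in> {x \<in> topspace (prod_topology (top_of_set {0..1}) ?X). (case x of (s, f) \<Rightarrow> cutf s f) \<in> U}"
    then have s0: "s0 \<in> {0..1}" and f0: "f0 \<in> ?Y" and cU: "cutf s0 f0 \<in> U"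
      by (auto simp: pm_topspace)
    obtain e where e: "e > 0" "\<And>y. y \<in> ?Y \<Longrightarrow> L2_dist (cutf s0 f0) y < e \<Longrightarrow> y \<in> U"
      using U cU unfolding pm_openin by blast
    have f0L: "f0 \<in> L2_loops" using f0 L2_in_sub by blast
    have [measurable]: "f0 \<in> borel_measurable M01" and if0: "integrable M01 (\<lambda>t. (norm (f0 t))\<^sup>2)"
      using f0L by (simp_all add: L2_loops_def)
    have "e\<^sup>2 / 4 > 0" using e by simp
    from small_ivl_integral[OF _ if0 _ this, of "1 - s0"]
    obtain \<theta> where th: "\<theta> > 0" and
      J: "integral\<^sup>L M01 (\<lambda>t. indicator {1 - s0 - \<theta>..1 - s0 + \<theta>} t * (norm (f0 t))\<^sup>2) < e\<^sup>2 / 4"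
      by (auto simp: algebra_simps)
    show "\<exists>U1 V1. openin (top_of_set {0..1}) U1 \<and> openin ?X V1 \<and> s0 \<in> U1 \<and> f0 \<in> V1 \<and>
         U1 \<times> V1 \<subseteq> {x \<in> topspace (prod_topology (top_of_set {0..1}) ?X). (case x of (s, f) \<Rightarrow> cutf s f) \<in> U}"
    proof (intro exI[of _ "{0..1} \<inter> ball s0 \<theta>"] exI[of _ "{f \<in> ?Y. L2_dist f0 f < e / 2}"] conjI)
      show "openin (top_of_set {0..1}) ({0..1} \<inter> ball s0 \<theta>)" by (rule openin_open_Int) simp
      show "openin ?X {f \<in> ?Y. L2_dist f0 f < e / 2}" by (rule ball_open[OF f0])
      show "s0 \<in> {0..1} \<inter> ball s0 \<theta>" using s0 th by simp
      show "f0 \<in> {f \<in> ?Y. L2_dist f0 f < e / 2}" using f0 e by (simp add: L2_dist_self)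
      show "({0..1} \<inter> ball s0 \<theta>) \<times> {f \<in> ?Y. L2_dist f0 f < e / 2}
         \<subseteq> {x \<in> topspace (prod_topology (top_of_set {0..1}) ?X). (case x of (s, f) \<Rightarrow> cutf s f) \<in> U}"
      proof (intro subsetI)
        fix x assume "x \<in> ({0..1} \<inter> ball s0 \<theta>) \<times> {f \<in> ?Y. L2_dist f0 f < e / 2}"
        then obtain s f where x: "x = (s, f)" and s: "0 \<le> s" "s \<le> 1" "s \<in> ball s0 \<theta>"
          and f: "f \<in> ?Y" and df: "L2_dist f0 f < e / 2" by auto
        have fL: "f \<in> L2_loops" using f L2_in_sub by blast
        have sd: "\<bar>s - s0\<bar> < \<theta>" using s(3) by (simp add: dist_real_def abs_minus_commute)
        have est: "integral\<^sup>L M01 (\<lambda>t. (norm (cutf s0 f0 t - cutf s f t))\<^sup>2)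
           \<le> 2 * integral\<^sup>L M01 (\<lambda>t. (norm (f0 t - f t))\<^sup>2)
             + 2 * integral\<^sup>L M01 (\<lambda>t. indicator {1 - s0 - \<theta>..1 - s0 + \<theta>} t * (norm (f0 t))\<^sup>2)"
          by (rule cut_cont_est[OF f0L fL _ _ s(1,2) sd]) (use s0 in auto)
        define D where "D = integral\<^sup>L M01 (\<lambda>t. (norm (f0 t - f t))\<^sup>2)"
        have D0: "0 \<le> D" unfolding D_def by (rule integral_nonneg_AE) simp
        have "L2_dist f0 f = sqrt D" by (simp add: L2_dist_def D_def)
        then have "sqrt D < e / 2" using df by simp
        then have "(sqrt D)\<^sup>2 < (e / 2)\<^sup>2" using D0 by (intro power_strict_mono) auto
        then have DD: "D < e\<^sup>2 / 4" using D0 by (simp add: power_divide)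
        have "integral\<^sup>L M01 (\<lambda>t. (norm (cutf s0 f0 t - cutf s f t))\<^sup>2) < e\<^sup>2"
          using est J DD unfolding D_def by linarith
        then have "sqrt (integral\<^sup>L M01 (\<lambda>t. (norm (cutf s0 f0 t - cutf s f t))\<^sup>2)) < sqrt (e\<^sup>2)"
          by (rule real_sqrt_less_mono)
        then have "L2_dist (cutf s0 f0) (cutf s f) < e" using e by (simp add: L2_dist_def)
        moreover have "cutf s f \<in> ?Y" using cutf_in[OF sm conn N0 R f] s by simp
        ultimately have "cutf s f \<in> U" using e(2) by blast
        then show "x \<in> {x \<in> topspace (prod_topology (top_of_set {0..1}) ?X). (case x of (s, f) \<Rightarrow> cutf s f) \<in> U}"
          using x s f by (simp add: pm_topspace)
      qed
    qed
  qed
qed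

theorem theorem5:
  fixes N :: "(complex ^ 'n ^ 'n) set"
  assumes "smooth_submanifold N"
    and "compact N"
    and "connected N"
    and "0 \<in> N"
  shows "contractible_space (pmetric_topology (L2_loops_in N) L2_dist)"
proof -
  obtain R where R: "\<And>x. x \<in> N \<Longrightarrow> norm x \<le> R"
    using compact_imp_bounded[OF assms(2)] unfolding bounded_iff by blast
  have c: "continuous_map (prod_topology (top_of_set {0..1}) (pmetric_topology (L2_loops_in N) L2_dist))
           (pmetric_topology (L2_loops_in N) L2_dist) (\<lambda>(s,f). cutf s f)"
    by (rule cut_cont[OF assms(1,3,4) R])
  have "homotopic_with (\<lambda>x. True) (pmetric_topology (L2_loops_in N) L2_dist) (pmetric_topology (L2_loops_in N) L2_dist)
          id (\<lambda>x. (\<lambda>t. 0))"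
    unfolding homotopic_with_def
    by (intro exI[of _ "\<lambda>(s,f). cutf s f"] conjI c allI ballI) (simp_all add: cutf_def)
  then show ?thesis unfolding contractible_space_def by blast
qed

end
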